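(* Let $M\in\mathbb{R}^{n\times n}$ be such that the function $x\mapsto x^TMx$ belongs to the class $\mathcal{Q}$, and let $Z=\sum_{P\in\mathcal{P}} P^TMP$, where $\mathcal{P}$ is the set of all $n\times n$ permutation matrices. Then there exists $\alpha>0$ such that $x^TZx=\alpha V(x)$ for all $x\in\mathbb{R}^n$, where $V(x)=\sum_{i=1}^n (x_i-\bar{x})^2$ with $\bar{x}=\frac1n\sum_{i=1}^n x_i$.
   Context: Fix a positive integer $n$. Let $\mathbf{e}\in\mathbb{R}^n$ be the all-ones vector. A square matrix is stochastic if it is entrywise nonnegative and each row sums to $1$. Let $\mathcal{A}\subset\mathbb{R}^{n\times n}$ be the set of stochastic matrices $A=(a_{ij})$ such that: (i) $a_{ii}>0$ for all $i$; (ii) all positive entries in any given row of $A$ are equal; (iii) $a_{ij}>0$ if and only if $a_{ji}>0$; (iv) the graph on $\{1,\dots,n\}$ with edge set $\{(i,j): a_{ij}>0\}$ is connected. The class $\mathcal{Q}$ consists of all functions $Q(x)=x^TMx$ on $\mathbb{R}^n$ where (a) $M$ is nonzero, symmetric and nonnegative definite; (b) $x^TA^TMAx\le x^TMx$ for all $A\in\mathcal{A}$ and $x\in\mathbb{R}^n$; (c) $Q(\mathbf{e})=0$ (equivalently $M\mathbf{e}=0$). For a permutation $\sigma$ of $\{1,\dots,n\}$, the permutation matrix $P_\sigma$ is defined by $(P_\sigma x)_i=x_{\sigma(i)}$; $\mathcal{P}$ is the set of all such matrices. *)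

theory Defs
  imports "HOL-Analysis.Analysis" "HOL-Combinatorics.Permutations"
begin

text \<open>Vectors in R^n are real^'n, n x n matrices are real^'n^'n (rows indexed first).\<close>

definition stochastic :: "real^'n^'n \<Rightarrow> bool" where
  "stochastic A \<longleftrightarrow> (\<forall>i j. A$i$j \<ge> 0) \<and> (\<forall>i. (\<Sum>j\<in>UNIV. A$i$j) = 1)"

text \<open>The class \<A>: conditions (i)-(iv). Connectivity: every pair of indices is joined
  by a path in the graph with edges {(i,j). a_ij > 0}.\<close>
definition class_A :: "real^'n^'n \<Rightarrow> bool" where
  "class_A A \<longleftrightarrow> stochastic A
     \<and> (\<forall>i. A$i$i > 0)
     \<and> (\<forall>i j k. A$i$j > 0 \<longrightarrow> A$i$k > 0 \<longrightarrow> A$i$j = A$i$k)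
     \<and> (\<forall>i j. A$i$j > 0 \<longleftrightarrow> A$j$i > 0)
     \<and> (\<forall>i j. (i, j) \<in> {(k, l). A$k$l > 0}\<^sup>*)"

definition quad :: "real^'n^'n \<Rightarrow> real^'n \<Rightarrow> real" where
  "quad M x = x \<bullet> (M *v x)"

definition class_Q :: "real^'n^'n \<Rightarrow> bool" where
  "class_Q M \<longleftrightarrow> M \<noteq> 0 \<and> transpose M = M \<and> (\<forall>x. quad M x \<ge> 0)
     \<and> (\<forall>A x. class_A A \<longrightarrow> quad (transpose A ** M ** A) x \<le> quad M x)
     \<and> quad M (\<chi> i. 1) = 0"

definition perm_mat :: "('n \<Rightarrow> 'n) \<Rightarrow> real^'n^'n" where
  "perm_mat \<sigma> = (\<chi> i j. if \<sigma> i = j then 1 else 0)"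

definition perm_mats :: "(real^'n^'n) set" where
  "perm_mats = {perm_mat \<sigma> | \<sigma>. \<sigma> permutes (UNIV :: 'n set)}"

definition Vfun :: "real^'n \<Rightarrow> real" where
  "Vfun x = (let m = (\<Sum>i\<in>UNIV. x$i) / real CARD('n) in \<Sum>i\<in>UNIV. (x$i - m)^2)"

end

theory Submission
  imports Defs
begin

lemma quad_expand: "quad M x = (\<Sum>i\<in>UNIV. \<Sum>j\<in>UNIV. M$i$j * x$i * x$j)"
  unfolding quad_def inner_vec_def matrix_vector_mult_def
  by (simp add: sum_distrib_left mult_ac)

lemma quad_sum: "quad (\<Sum>P\<in>S. f P) x = (\<Sum>P\<in>S. quad (f P) x)"
proof -
  have "quad (\<Sum>P\<in>S. f P) x = (\<Sum>i\<in>UNIV. \<Sum>j\<in>UNIV. \<Sum>P\<in>S. f P$i$j*x$i*x$j)"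
    unfolding quad_expand by (simp only: sum_component sum_distrib_right)
  also have "\<dots> = (\<Sum>i\<in>UNIV. \<Sum>P\<in>S. \<Sum>j\<in>UNIV. f P$i$j*x$i*x$j)"
    by (rule sum.cong[OF refl], rule sum.swap)
  also have "\<dots> = (\<Sum>P\<in>S. quad (f P) x)"
    unfolding quad_expand by (rule sum.swap)
  finally show ?thesis .
qed

lemma quad_conj: "quad (Finite_Cartesian_Product.transpose P ** M ** P) x = quad M (P *v x)"
proof -
  have "quad (Finite_Cartesian_Product.transpose P ** M ** P) x
      = x \<bullet> (Finite_Cartesian_Product.transpose P *v (M *v (P *v x)))"
    unfolding quad_def by (simp add: matrix_vector_mul_assoc matrix_mul_assoc)
  also have "\<dots> = (P *v x) \<bullet> (M *v (P *v x))"
    unfolding transpose_matrix_vector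
    by (subst inner_commute, subst dot_lmul_matrix, rule inner_commute)
  finally show ?thesis unfolding quad_def .
qed

lemma perm_mat_vec: "perm_mat \<sigma> *v x = (\<chi> i. x $ \<sigma> i)"
  unfolding perm_mat_def matrix_vector_mult_def
  by (simp add: vec_eq_iff if_distrib[of "\<lambda>v. v * _"] cong: if_cong)

lemma perm_mat_inj: "inj_on perm_mat S"
proof (rule inj_onI)
  fix s t assume "perm_mat s = perm_mat t"
  then have "\<And>i. perm_mat s $ i $ s i = perm_mat t $ i $ s i" by simp
  then have "\<And>i. (if t i = s i then 1 else 0::real) = 1" unfolding perm_mat_def by simp
  then have "\<And>i. t i = s i" by (metis zero_neq_one)
  then show "s = t" by auto
qed

definition cc :: "real^'n \<Rightarrow> 'n \<Rightarrow> 'n \<Rightarrow> real" where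
  "cc x i j = (\<Sum>\<sigma>\<in>{\<sigma>. \<sigma> permutes (UNIV::'n set)}. x $ \<sigma> i * x $ \<sigma> j)"

lemma cc_inv: "\<tau> permutes UNIV \<Longrightarrow> cc x (\<tau> i) (\<tau> j) = cc x i j"
  unfolding cc_def
  by (rule sum_permutations_compose_right[of \<tau> UNIV "\<lambda>p. x $ p i * x $ p j", unfolded comp_def, symmetric])

lemma ex_perm2:
  fixes a b i j :: "'n"
  assumes "a \<noteq> b" "i \<noteq> j"
  shows "\<exists>\<tau>. \<tau> permutes (UNIV::'n set) \<and> \<tau> a = i \<and> \<tau> b = j"
proof -
  define t1 where "t1 = Transposition.transpose a i"
  define b' where "b' = t1 b"
  have "b' \<noteq> i" unfolding b'_def t1_def using assms
    by (auto simp add: transpose_eq_iff)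
  define t2 where "t2 = Transposition.transpose b' j"
  have "t2 \<circ> t1 permutes (UNIV::'n set)" unfolding t1_def t2_def
    by (intro permutes_compose permutes_swap_id) auto
  moreover have "(t2 \<circ> t1) a = i" using \<open>b' \<noteq> i\<close> assms
    unfolding t1_def t2_def by simp
  moreover have "(t2 \<circ> t1) b = j" by (simp add: t2_def b'_def[symmetric])
  ultimately show ?thesis by blast
qed

lemma quad_Z:
  fixes M :: "real^'n::finite^'n"
  shows "quad (\<Sum>P\<in>perm_mats. Finite_Cartesian_Product.transpose P ** M ** P) x
   = (\<Sum>i\<in>UNIV. \<Sum>j\<in>UNIV. M$i$j * cc x i j)"
proof -
  have pm: "perm_mats = perm_mat ` {\<sigma>. \<sigma> permutes (UNIV::'n set)}"
    unfolding perm_mats_def by blast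
  have fin: "finite {\<sigma>. \<sigma> permutes (UNIV::'n set)}" by (simp add: finite_permutations)
  have "quad (\<Sum>P\<in>perm_mats. Finite_Cartesian_Product.transpose P ** M ** P) x
      = (\<Sum>P\<in>perm_mats. quad (Finite_Cartesian_Product.transpose P ** M ** P) x)"
    by (rule quad_sum)
  also have "\<dots> = (\<Sum>P\<in>perm_mats. quad M (P *v x))"
    by (simp only: quad_conj)
  also have "\<dots> = (\<Sum>\<sigma>\<in>{\<sigma>. \<sigma> permutes (UNIV::'n set)}. quad M (perm_mat \<sigma> *v x))"
    unfolding pm by (rule sum.reindex[OF perm_mat_inj, unfolded comp_def])
  also have "\<dots> = (\<Sum>\<sigma>\<in>{\<sigma>. \<sigma> permutes (UNIV::'n set)}. \<Sum>i\<in>UNIV. \<Sum>j\<in>UNIV. M$i$j * (x $ \<sigma> i * x $ \<sigma> j))"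
    unfolding quad_expand perm_mat_vec vec_lambda_beta mult.assoc ..
  also have "\<dots> = (\<Sum>i\<in>UNIV. \<Sum>j\<in>UNIV. M$i$j * cc x i j)"
    unfolding cc_def sum_distrib_left
    by (subst sum.swap, rule sum.cong[OF refl], subst sum.swap, rule refl)
  finally show ?thesis .
qed

lemma sum_perm_comp:
  fixes g :: "'n::finite \<Rightarrow> real"
  shows "\<sigma> permutes (UNIV::'n set) \<Longrightarrow> (\<Sum>i\<in>UNIV. g (\<sigma> i)) = (\<Sum>i\<in>UNIV. g i)"
  by (rule sum.reindex_bij_betw[OF permutes_imp_bij])

lemma card_perms: "card {\<sigma>. \<sigma> permutes (UNIV::'n::finite set)} = fact CARD('n)"
  by (rule card_permutations) auto

lemma cc_sum_diag:
  fixes x :: "real^'n::finite"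
  shows "(\<Sum>i\<in>UNIV. cc x i i) = fact CARD('n) * (\<Sum>i\<in>UNIV. x$i * x$i)"
proof -
  have "(\<Sum>i\<in>UNIV. cc x i i) = (\<Sum>\<sigma>\<in>{\<sigma>. \<sigma> permutes (UNIV::'n set)}. \<Sum>i\<in>UNIV. x $ \<sigma> i * x $ \<sigma> i)"
    unfolding cc_def by (rule sum.swap)
  also have "\<dots> = (\<Sum>\<sigma>\<in>{\<sigma>. \<sigma> permutes (UNIV::'n set)}. \<Sum>i\<in>UNIV. x$i * x$i)"
    by (rule sum.cong[OF refl]) (rule sum_perm_comp[of _ "\<lambda>k. x$k * x$k"], simp)
  also have "\<dots> = fact CARD('n) * (\<Sum>i\<in>UNIV. x$i * x$i)"
    by (simp add: card_perms)
  finally show ?thesis .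
qed

lemma cc_sum_all:
  fixes x :: "real^'n::finite"
  shows "(\<Sum>i\<in>UNIV. \<Sum>j\<in>UNIV. cc x i j) = fact CARD('n) * ((\<Sum>i\<in>UNIV. x$i) * (\<Sum>i\<in>UNIV. x$i))"
proof -
  have "(\<Sum>i\<in>UNIV. \<Sum>j\<in>UNIV. cc x i j) = (\<Sum>i\<in>UNIV. \<Sum>\<sigma>\<in>{\<sigma>. \<sigma> permutes (UNIV::'n set)}. \<Sum>j\<in>UNIV. x $ \<sigma> i * x $ \<sigma> j)"
    unfolding cc_def by (rule sum.cong[OF refl], rule sum.swap)
  also have "\<dots> = (\<Sum>\<sigma>\<in>{\<sigma>. \<sigma> permutes (UNIV::'n set)}. \<Sum>i\<in>UNIV. \<Sum>j\<in>UNIV. x $ \<sigma> i * x $ \<sigma> j)"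
    by (rule sum.swap)
  also have "\<dots> = (\<Sum>\<sigma>\<in>{\<sigma>. \<sigma> permutes (UNIV::'n set)}. (\<Sum>i\<in>UNIV. x $ \<sigma> i) * (\<Sum>j\<in>UNIV. x $ \<sigma> j))"
    by (simp only: sum_product)
  also have "\<dots> = (\<Sum>\<sigma>\<in>{\<sigma>. \<sigma> permutes (UNIV::'n set)}. (\<Sum>i\<in>UNIV. x$i) * (\<Sum>i\<in>UNIV. x$i))"
    by (rule sum.cong[OF refl]) (simp add: sum_perm_comp[of _ "\<lambda>k. x$k"])
  also have "\<dots> = fact CARD('n) * ((\<Sum>i\<in>UNIV. x$i) * (\<Sum>i\<in>UNIV. x$i))"
    by (simp add: card_perms)
  finally show ?thesis .
qed

lemma Vfun_eq:
  fixes x :: "real^'n::finite"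
  shows "Vfun x = (\<Sum>i\<in>UNIV. x$i * x$i) - (\<Sum>i\<in>UNIV. x$i) * (\<Sum>i\<in>UNIV. x$i) / real CARD('n)"
proof -
  define m where "m = (\<Sum>i\<in>UNIV. x$i) / real CARD('n)"
  have "Vfun x = (\<Sum>i\<in>UNIV. (x$i - m)^2)" unfolding Vfun_def m_def Let_def ..
  also have "\<dots> = (\<Sum>i\<in>UNIV. x$i * x$i) - 2 * m * (\<Sum>i\<in>UNIV. x$i) + real CARD('n) * m * m"
    by (simp add: power2_eq_square algebra_simps sum.distrib sum_subtractf sum_distrib_left)
  also have "\<dots> = (\<Sum>i\<in>UNIV. x$i * x$i) - (\<Sum>i\<in>UNIV. x$i) * (\<Sum>i\<in>UNIV. x$i) / real CARD('n)"
    unfolding m_def by (simp add: field_simps power2_eq_square)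
  finally show ?thesis .
qed

lemma sum_if_out: "(\<Sum>j\<in>S. if P then f j else (0::real)) = (if P then \<Sum>j\<in>S. f j else 0)"
  by simp

lemma quad_two:
  fixes M :: "real^'n::finite^'n"
  assumes "i \<noteq> j"
  shows "quad M (\<chi> k. (if k = i then 1 else 0) + (if k = j then t else 0))
       = M$i$i + t * M$i$j + t * M$j$i + t * t * M$j$j"
  using assms unfolding quad_expand
  by (simp add: algebra_simps sum.distrib if_distrib[of "\<lambda>v. _ * v"] sum_distrib_left[symmetric] sum_if_out cong: if_cong)

lemma quad_one:
  fixes M :: "real^'n::finite^'n"
  shows "quad M (\<chi> k. if k = i then 1 else 0) = M$i$i"
  unfolding quad_expand
  by (simp add: if_distrib[of "\<lambda>v. _ * v"] cong: if_cong)

theorem lemma2: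
  fixes M :: "real^'n^'n"
  assumes "class_Q M"
  shows "\<exists>\<alpha>>0. \<forall>x. quad (\<Sum>P\<in>perm_mats. transpose P ** M ** P) x = \<alpha> * Vfun x"
proof -
  have Mne: "M \<noteq> 0" and Msym: "transpose M = M" and psd: "\<And>x. quad M x \<ge> 0"
    and Me: "quad M (\<chi> i. 1) = 0"
    using assms unfolding class_Q_def by auto
  have sym: "M$j$i = M$i$j" for i j
  proof -
    have "transpose M $ i $ j = M $ j $ i" by (simp add: Finite_Cartesian_Product.transpose_def)
    then show ?thesis using Msym by simp
  qed
  define tr where "tr = (\<Sum>i\<in>UNIV. M$i$i)"
  have diag_nn: "M$i$i \<ge> 0" for i
    using psd[of "\<chi> k. if k = i then 1 else 0"] by (simp add: quad_one)
  have tot: "(\<Sum>i\<in>UNIV. \<Sum>j\<in>UNIV. M$i$j) = 0"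
    using Me unfolding quad_expand by simp
  have trpos: "tr > 0"
  proof (rule ccontr)
    assume "\<not> tr > 0"
    then have "tr = 0" using diag_nn unfolding tr_def by (meson not_less sum_nonneg order.antisym)
    then have d0: "M$i$i = 0" for i
      using diag_nn unfolding tr_def by (simp add: sum_nonneg_eq_0_iff)
    have "M$i$j = 0" for i j
    proof (cases "i = j")
      case True then show ?thesis using d0 by simp
    next
      case False
      have "0 \<le> quad M (\<chi> k. (if k = i then 1 else 0) + (if k = j then - M$i$j else 0))"
        by (rule psd)
      also have "\<dots> = - 2 * (M$i$j * M$i$j)"
        using False by (simp add: quad_two d0 sym[of i j])
      finally have "M$i$j * M$i$j \<le> 0" by simp
      then show ?thesis by (metis mult_eq_0_iff not_square_less_zero order_antisym_conv zero_le_square)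
    qed
    then have "M = 0" by (simp add: vec_eq_iff)
    then show False using Mne by simp
  qed
  obtain a :: 'n where True by simp
  obtain b :: 'n where ab: "a \<noteq> b"
  proof (rule ccontr)
    assume "\<not> thesis"
    then have "\<forall>b. b = a" using that by metis
    then have U: "UNIV = {a}" by auto
    have "(\<Sum>i\<in>UNIV. \<Sum>j\<in>UNIV. M$i$j) = tr" unfolding tr_def U by simp
    then show False using tot trpos by simp
  qed
  define n where "n = real CARD('n)"
  define N where "N = (fact CARD('n) :: real)"
  have n2: "n \<ge> 2"
  proof -
    have "card {a, b} \<le> CARD('n)" by (rule card_mono) auto
    then show ?thesis using ab unfolding n_def by simp
  qed
  define \<alpha> where "\<alpha> = N / (n - 1) * tr"
  have "\<alpha> > 0" unfolding \<alpha>_def N_def using n2 trpos by simp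
  moreover have "quad (\<Sum>P\<in>perm_mats. transpose P ** M ** P) x = \<alpha> * Vfun x" for x
  proof -
    define d where "d = cc x a a"
    define off where "off = cc x a b"
    define S1 where "S1 = (\<Sum>i\<in>UNIV. x$i)"
    define S2 where "S2 = (\<Sum>i\<in>UNIV. x$i * x$i)"
    have ccd: "cc x i i = d" for i
      unfolding d_def using cc_inv[of "Transposition.transpose a i" x a a]
      by (simp add: permutes_swap_id)
    have cco: "cc x i j = off" if ij: "i \<noteq> j" for i j
    proof -
      obtain \<tau> where "\<tau> permutes UNIV" "\<tau> a = i" "\<tau> b = j"
        using ex_perm2[OF ab ij] by blast
      then show ?thesis unfolding off_def using cc_inv[of \<tau> x a b] by simp
    qed
    have ccf: "cc x i j = off + (if i = j then d - off else 0)" for i j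
      using ccd cco by simp
    have inner: "(\<Sum>j\<in>UNIV. cc x i j) = n * off + (d - off)" for i
      unfolding ccf n_def by (simp add: sum.distrib)
    have e1: "n * d = N * S2"
      using cc_sum_diag[of x] unfolding ccd S2_def N_def n_def by simp
    have e2: "n * (n * off + (d - off)) = N * (S1 * S1)"
      using cc_sum_all[of x] unfolding inner S1_def N_def n_def by simp
    have "quad (\<Sum>P\<in>perm_mats. transpose P ** M ** P) x = (\<Sum>i\<in>UNIV. \<Sum>j\<in>UNIV. M$i$j * cc x i j)"
      by (rule quad_Z)
    also have "\<dots> = (\<Sum>i\<in>UNIV. \<Sum>j\<in>UNIV. off * M$i$j + (if i = j then (d - off) * M$i$j else 0))"
      unfolding ccf by (simp add: algebra_simps if_distrib cong: if_cong)
    also have "\<dots> = off * (\<Sum>i\<in>UNIV. \<Sum>j\<in>UNIV. M$i$j) + (d - off) * tr"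
      unfolding tr_def by (simp add: sum.distrib sum_distrib_left)
    also have "\<dots> = (d - off) * tr" using tot by simp
    also have "\<dots> = \<alpha> * Vfun x"
    proof -
      have V: "Vfun x = S2 - S1 * S1 / n" unfolding Vfun_eq S1_def S2_def n_def ..
      have "(d - off) * (n * (n - 1)) = N * (n * S2 - S1 * S1)"
        using e1 e2 by (simp add: algebra_simps)
      then have "d - off = N / (n - 1) * (S2 - S1 * S1 / n)"
        using n2 by (simp add: field_simps)
      then show ?thesis unfolding V \<alpha>_def by (simp add: mult_ac)
    qed
    finally show ?thesis .
  qed
  ultimately show ?thesis by blast
qed

end
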